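(* Let $B$ be a commutative ring with identity and $A$ a subring of $B$ containing the identity such that for any two distinct maximal ideals $M, M'$ of $B$, $(M\cap A)+(M'\cap A)=A$. Then for any two distinct maximal ideals $M\neq M'$ of $B$, $M\cap A$ and $M'\cap A$ are non-comparable, and $A$ is a weak completely normal subring of $B$.
   Context: $\operatorname{spec} A$ is the set of prime ideals of $A$ with the Zariski topology. A subring $A$ of $B$ is a weak completely normal subring of $B$ if for any two distinct maximal ideals $M\neq M'$ of $B$ such that $M\cap A$ and $M'\cap A$ are non-comparable, $\operatorname{cl}_{\operatorname{spec} A}\{M\cap A\}\cap \operatorname{cl}_{\operatorname{spec} A}\{M'\cap A\}=\emptyset$. *)

theory Defs
  imports "HOL-Algebra.Algebra"
begin

definition Spec :: "('a, 'b) ring_scheme \<Rightarrow> 'a set set" where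
  "Spec R = {P. primeideal P R}"

definition zariski_closed :: "('a, 'b) ring_scheme \<Rightarrow> 'a set set \<Rightarrow> bool" where
  "zariski_closed R S \<longleftrightarrow> (\<exists>I. I \<subseteq> carrier R \<and> S = {P \<in> Spec R. I \<subseteq> P})"

definition zariski_closure :: "('a, 'b) ring_scheme \<Rightarrow> 'a set set \<Rightarrow> 'a set set" where
  "zariski_closure R T = \<Inter> {S. zariski_closed R S \<and> T \<subseteq> S}"

definition non_comparable :: "'a set \<Rightarrow> 'a set \<Rightarrow> bool" where
  "non_comparable P Q \<longleftrightarrow> \<not> P \<subseteq> Q \<and> \<not> Q \<subseteq> P"

definition weak_completely_normal_subring :: "'a set \<Rightarrow> ('a, 'b) ring_scheme \<Rightarrow> bool" where
  "weak_completely_normal_subring A B \<longleftrightarrow>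
     (\<forall>M M'. maximalideal M B \<and> maximalideal M' B \<and> M \<noteq> M' \<and> non_comparable (M \<inter> A) (M' \<inter> A)
        \<longrightarrow> zariski_closure (B\<lparr>carrier := A\<rparr>) {M \<inter> A} \<inter> zariski_closure (B\<lparr>carrier := A\<rparr>) {M' \<inter> A} = {})"

end

theory Submission
  imports Defs
begin

theorem lemma4p4:
  fixes B (structure) and A :: "'a set"
  assumes "cring B"
    and "subring A B"
    and "\<And>M M'. \<lbrakk>maximalideal M B; maximalideal M' B; M \<noteq> M'\<rbrakk> \<Longrightarrow>
           (M \<inter> A) <+>\<^bsub>B\<lparr>carrier := A\<rparr>\<^esub> (M' \<inter> A) = A"
  shows "(\<forall>M M'. maximalideal M B \<and> maximalideal M' B \<and> M \<noteq> M' \<longrightarrow> non_comparable (M \<inter> A) (M' \<inter> A))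
         \<and> weak_completely_normal_subring A B"
proof -
  interpret cring B by fact
  let ?A = "B\<lparr>carrier := A\<rparr>"
  have Asub: "A \<subseteq> carrier B" and oneA: "\<one> \<in> A" using subringE[OF assms(2)] by auto
  have crA: "cring ?A" using subcring_iff[OF Asub] subcringI'[OF assms(2)] by simp
  have hom: "id \<in> ring_hom ?A B"
    by (rule ring_hom_memI) (use Asub in auto)
  have rhr: "ring_hom_ring ?A B id"
    using hom crA ring_axioms unfolding ring_hom_ring_def ring_hom_ring_axioms_def cring_def by simp
  have sumsub: "(I \<inter> A) <+>\<^bsub>?A\<^esub> (J \<inter> A) \<subseteq> K"
    if "ideal K B" "I \<inter> A \<subseteq> K" "J \<inter> A \<subseteq> K" for I J K
  proof
    fix x assume "x \<in> (I \<inter> A) <+>\<^bsub>?A\<^esub> (J \<inter> A)"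
    then obtain h k where "h \<in> I \<inter> A" "k \<in> J \<inter> A" "x = h \<oplus> k"
      unfolding set_add_def' by auto
    moreover have "h \<in> K" "k \<in> K" using that \<open>h \<in> I \<inter> A\<close> \<open>k \<in> J \<inter> A\<close> by auto
    ultimately show "x \<in> K" using additive_subgroup.a_closed[OF ideal.axioms(1)[OF that(1)]] by simp
  qed
  have prime: "primeideal (M \<inter> A) ?A" if "maximalideal M B" for M
  proof -
    have "primeideal M B" using maximalideal_prime[OF that] .
    from ring_hom_ring.primeideal_vimage[OF rhr crA this]
    have "primeideal {r \<in> carrier ?A. id r \<in> M} ?A" .
    moreover have "{r \<in> carrier ?A. id r \<in> M} = M \<inter> A" by auto
    ultimately show ?thesis by simp
  qed
  have part1: "non_comparable (M \<inter> A) (M' \<inter> A)"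
    if M: "maximalideal M B" and M': "maximalideal M' B" and ne: "M \<noteq> M'" for M M'
  proof -
    have notin: "\<one> \<notin> N" if "maximalideal N B" for N
      using maximalideal.I_notcarr[OF that] ideal.one_imp_carrier[OF maximalideal.axioms(1)[OF that]] by blast
    have "\<not> M \<inter> A \<subseteq> M' \<inter> A"
    proof
      assume "M \<inter> A \<subseteq> M' \<inter> A"
      hence "A \<subseteq> M'" using sumsub[of M' M M'] assms(3)[OF M M' ne] M' maximalideal.axioms(1) by blast
      thus False using notin[OF M'] oneA by blast
    qed
    moreover have "\<not> M' \<inter> A \<subseteq> M \<inter> A"
    proof
      assume "M' \<inter> A \<subseteq> M \<inter> A"
      hence "A \<subseteq> M" using sumsub[of M M M'] assms(3)[OF M M' ne] M maximalideal.axioms(1) by blast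
      thus False using notin[OF M] oneA by blast
    qed
    ultimately show ?thesis unfolding non_comparable_def by blast
  qed
  have clos: "zariski_closure ?A {M \<inter> A} \<subseteq> {P \<in> Spec ?A. M \<inter> A \<subseteq> P}" if "maximalideal M B" for M
  proof -
    have "zariski_closed ?A {P \<in> Spec ?A. M \<inter> A \<subseteq> P}"
      unfolding zariski_closed_def by (rule exI[of _ "M \<inter> A"]) auto
    moreover have "M \<inter> A \<in> Spec ?A" using prime[OF that] unfolding Spec_def by simp
    ultimately show ?thesis unfolding zariski_closure_def by blast
  qed
  have part2: "weak_completely_normal_subring A B"
    unfolding weak_completely_normal_subring_def
  proof (intro allI impI)
    fix M M' assume h: "maximalideal M B \<and> maximalideal M' B \<and> M \<noteq> M' \<and> non_comparable (M \<inter> A) (M' \<inter> A)"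
    show "zariski_closure ?A {M \<inter> A} \<inter> zariski_closure ?A {M' \<inter> A} = {}"
    proof (rule ccontr)
      assume "zariski_closure ?A {M \<inter> A} \<inter> zariski_closure ?A {M' \<inter> A} \<noteq> {}"
      then obtain P where P: "P \<in> Spec ?A" "M \<inter> A \<subseteq> P" "M' \<inter> A \<subseteq> P"
        using clos h by blast
      have pP: "primeideal P ?A" using P(1) unfolding Spec_def by simp
      have idP: "ideal P ?A" using pP primeideal.axioms(1) by blast
      have "(M \<inter> A) <+>\<^bsub>?A\<^esub> (M' \<inter> A) \<subseteq> P"
      proof
        fix x assume "x \<in> (M \<inter> A) <+>\<^bsub>?A\<^esub> (M' \<inter> A)"
        then obtain a b where ab: "a \<in> M \<inter> A" "b \<in> M' \<inter> A" "x = a \<oplus>\<^bsub>?A\<^esub> b"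
          unfolding set_add_def' by auto
        moreover have "a \<in> P" "b \<in> P" using ab P by auto
        ultimately show "x \<in> P" using additive_subgroup.a_closed[OF ideal.axioms(1)[OF idP]] by simp
      qed
      hence "A \<subseteq> P" using assms(3) h by simp
      moreover have "P \<subseteq> A" using additive_subgroup.a_subset[OF ideal.axioms(1)[OF idP]] by simp
      ultimately show False using primeideal.I_notcarr[OF pP] by simp
    qed
  qed
  show ?thesis using part1 part2 by blast
qed

end
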